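(* Let $G=(V,E)$ be a directed graph with a partition of $V$ into disjoint regions $R_1,\dots,R_k$, let $f\in\mathbb{N}$, $\ell=2f+1$, $V'=V\times[\ell]$, $v_i=(v,i)$, $P(v_i)=v$, and $E'=\bigcup_{e\in E}E'_e$ where for $e=(v,w)\in E$, $E'_e=\{(v_i,w_i): i\in[\ell]\}$ if $v,w$ lie in the same region and $E'_e=\{(v_i,w_j): i,j\in[\ell]\}$ otherwise. For $v'\in V'$ and $(w,P(v'))\in E$ let $N_{v'}(w)=\{w'\in V': P(w')=w,\ (w',v')\in E'\}$. Let $A$ be a scheduling algorithm on $G$ and $A'$ the algorithm in which each non-faulty $v'\in V'$: (1) initializes local copies of the state variables of $P(v')$ as in $A$; (2) in each round sends on each link $(v',w')\in E'$ the message $P(v')$ would send on $(P(v'),P(w'))$ under $A$ according to its local state; (3) updates its state in each round as if $P(v')$ received, for each $(w,P(v'))\in E$, the message sent by the majority of the nodes in $N_{v'}(w)$. Let $F'\subseteq V'$ be a set of Byzantine nodes such that for each $k'\in[k]$ there are at least $f+1$ indices $i\in[\ell]$ with $\{v_i:v\in R_{k'}\}\cap F'=\emptyset$. Then $A'$ simulates $A$: assuming each non-faulty $v'$ receives the same environment input as $P(v')$, for each $v\in V$ a strict majority of its copies $v_1,\dots,v_\ell$ compute in every round the state of $v$ in the fault-free execution of $A$ on $G$.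
   Context: Networks are synchronous directed graphs running a scheduling algorithm (each round: send messages on outgoing links based on state, then update state from received messages and environment input). Byzantine faulty nodes may behave arbitrarily. $[\ell]=\{1,\dots,\ell\}$. *)

theory Defs
  imports Main
begin

text \<open>A synchronous scheduling algorithm on a directed graph (V,E) is given by
  an initial state per node, a message function (node, round, own state, receiver)
  and a state-update function (node, round, own state, received messages indexed by
  the in-neighbour they arrive from (None for non-neighbours), environment input).\<close>

definition same_region :: "(nat \<Rightarrow> 'v set) \<Rightarrow> nat \<Rightarrow> 'v \<Rightarrow> 'v \<Rightarrow> bool" where
  "same_region R k v w \<longleftrightarrow> (\<exists>k'\<in>{1..k}. v \<in> R k' \<and> w \<in> R k')"

definition Eprime :: "('v \<times> 'v) set \<Rightarrow> (nat \<Rightarrow> 'v set) \<Rightarrow> nat \<Rightarrow> nat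
    \<Rightarrow> (('v \<times> nat) \<times> ('v \<times> nat)) set" where
  "Eprime E R k l = (\<Union>e\<in>E.
      if same_region R k (fst e) (snd e)
      then {((fst e, i), (snd e, i)) | i. i \<in> {1..l}}
      else {((fst e, i), (snd e, j)) | i j. i \<in> {1..l} \<and> j \<in> {1..l}})"

definition Nb :: "'v set \<Rightarrow> ('v \<times> 'v) set \<Rightarrow> (nat \<Rightarrow> 'v set) \<Rightarrow> nat \<Rightarrow> nat
    \<Rightarrow> ('v \<times> nat) \<Rightarrow> 'v \<Rightarrow> ('v \<times> nat) set" where
  "Nb V E R k l v' w = {w' \<in> V \<times> {1..l}. fst w' = w \<and> (w', v') \<in> Eprime E R k l}"

definition maj :: "'a set \<Rightarrow> ('a \<Rightarrow> 'm) \<Rightarrow> 'm \<Rightarrow> 'm" where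
  "maj S g d = (if \<exists>m. 2 * card {x \<in> S. g x = m} > card S
                then (THE m. 2 * card {x \<in> S. g x = m} > card S) else d)"

text \<open>Fault-free execution of A on G: state of node v at (the beginning of) round r.\<close>
primrec exec_A :: "('v \<times> 'v) set \<Rightarrow> ('v \<Rightarrow> 's) \<Rightarrow> ('v \<Rightarrow> nat \<Rightarrow> 's \<Rightarrow> 'v \<Rightarrow> 'm)
    \<Rightarrow> ('v \<Rightarrow> nat \<Rightarrow> 's \<Rightarrow> ('v \<Rightarrow> 'm option) \<Rightarrow> 'e \<Rightarrow> 's) \<Rightarrow> (nat \<Rightarrow> 'v \<Rightarrow> 'e)
    \<Rightarrow> nat \<Rightarrow> 'v \<Rightarrow> 's" where
  "exec_A E init send upd env 0 = init"
| "exec_A E init send upd env (Suc r) =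
     (\<lambda>v. upd v r (exec_A E init send upd env r v)
            (\<lambda>w. if (w, v) \<in> E then Some (send w r (exec_A E init send upd env r w) v) else None)
            (env r v))"

text \<open>Faulty nodes send arbitrary messages byz r w' v' (in round r on link (w',v'));
  their local states are irrelevant. dflt r v' w is the (arbitrary) value used when the
  messages from N_{v'}(w) have no strict majority.\<close>
primrec exec_A' :: "'v set \<Rightarrow> ('v \<times> 'v) set \<Rightarrow> (nat \<Rightarrow> 'v set) \<Rightarrow> nat \<Rightarrow> nat
    \<Rightarrow> ('v \<Rightarrow> 's) \<Rightarrow> ('v \<Rightarrow> nat \<Rightarrow> 's \<Rightarrow> 'v \<Rightarrow> 'm)
    \<Rightarrow> ('v \<Rightarrow> nat \<Rightarrow> 's \<Rightarrow> ('v \<Rightarrow> 'm option) \<Rightarrow> 'e \<Rightarrow> 's) \<Rightarrow> (nat \<Rightarrow> 'v \<Rightarrow> 'e)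
    \<Rightarrow> ('v \<times> nat) set \<Rightarrow> (nat \<Rightarrow> 'v \<times> nat \<Rightarrow> 'v \<times> nat \<Rightarrow> 'm)
    \<Rightarrow> (nat \<Rightarrow> 'v \<times> nat \<Rightarrow> 'v \<Rightarrow> 'm)
    \<Rightarrow> nat \<Rightarrow> 'v \<times> nat \<Rightarrow> 's" where
  "exec_A' V E R k l init send upd env F byz dflt 0 = (\<lambda>v'. init (fst v'))"
| "exec_A' V E R k l init send upd env F byz dflt (Suc r) =
     (\<lambda>v'. upd (fst v') r (exec_A' V E R k l init send upd env F byz dflt r v')
        (\<lambda>w. if (w, fst v') \<in> E
             then Some (maj (Nb V E R k l v' w)
                  (\<lambda>w'. if w' \<in> F then byz r w' v'
                        else send (fst w') r (exec_A' V E R k l init send upd env F byz dflt r w') (fst v'))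
                  (dflt r v' w))
             else None)
        (env r (fst v')))"

end

theory Submission
  imports Defs
begin

lemma maj_eq:
  assumes "finite S" "T \<subseteq> S" "\<forall>x\<in>T. g x = m" "2 * card T > card S"
  shows "maj S g d = m"
proof -
  have T: "T \<subseteq> {x \<in> S. g x = m}" using assms by auto
  hence c: "2 * card {x \<in> S. g x = m} > card S"
    using assms card_mono[of "{x \<in> S. g x = m}" T] by force
  have u: "m' = m" if "2 * card {x \<in> S. g x = m'} > card S" for m'
  proof (rule ccontr)
    assume ne: "m' \<noteq> m"
    have "card ({x \<in> S. g x = m'} \<union> {x \<in> S. g x = m}) = card {x \<in> S. g x = m'} + card {x \<in> S. g x = m}"
      by (rule card_Un_disjoint) (use assms ne in auto)
    moreover have "card ({x \<in> S. g x = m'} \<union> {x \<in> S. g x = m}) \<le> card S"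
      by (rule card_mono) (use assms in auto)
    ultimately show False using c that by linarith
  qed
  have "(THE m. 2 * card {x \<in> S. g x = m} > card S) = m"
    using c u by (rule the_equality)
  thus ?thesis unfolding maj_def using c by auto
qed

lemma Eprime_mem:
  "(((w, j), (v, i)) \<in> Eprime E R k l) \<longleftrightarrow> (w, v) \<in> E \<and> i \<in> {1..l} \<and> j \<in> {1..l} \<and>
      (same_region R k w v \<longrightarrow> j = i)"
  unfolding Eprime_def
proof (safe, goal_cases)
qed (fastforce split: if_splits)+

lemma Nb_same:
  assumes "(w, v) \<in> E" "same_region R k w v" "w \<in> V" "i \<in> {1..l}"
  shows "Nb V E R k l (v, i) w = {(w, i)}"
  using assms unfolding Nb_def by (auto simp: Eprime_mem)

lemma Nb_diff:
  assumes "(w, v) \<in> E" "\<not> same_region R k w v" "w \<in> V" "i \<in> {1..l}"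
  shows "Nb V E R k l (v, i) w = {w} \<times> {1..l}"
  using assms unfolding Nb_def by (auto simp: Eprime_mem)

theorem lemma8:
  fixes V :: "'v set" and E :: "('v \<times> 'v) set" and R :: "nat \<Rightarrow> 'v set"
    and k f l :: nat
    and init :: "'v \<Rightarrow> 's" and send :: "'v \<Rightarrow> nat \<Rightarrow> 's \<Rightarrow> 'v \<Rightarrow> 'm"
    and upd :: "'v \<Rightarrow> nat \<Rightarrow> 's \<Rightarrow> ('v \<Rightarrow> 'm option) \<Rightarrow> 'e \<Rightarrow> 's"
    and env :: "nat \<Rightarrow> 'v \<Rightarrow> 'e"
    and F :: "('v \<times> nat) set" and byz :: "nat \<Rightarrow> 'v \<times> nat \<Rightarrow> 'v \<times> nat \<Rightarrow> 'm"
    and dflt :: "nat \<Rightarrow> 'v \<times> nat \<Rightarrow> 'v \<Rightarrow> 'm"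
  assumes E_sub: "E \<subseteq> V \<times> V"
    and R_disj: "\<forall>i\<in>{1..k}. \<forall>j\<in>{1..k}. i \<noteq> j \<longrightarrow> R i \<inter> R j = {}"
    and R_cover: "(\<Union>i\<in>{1..k}. R i) = V"
    and l_def: "l = 2 * f + 1"
    and F_sub: "F \<subseteq> V \<times> {1..l}"
    and F_good: "\<forall>k'\<in>{1..k}. card {i \<in> {1..l}. {(v, i) | v. v \<in> R k'} \<inter> F = {}} \<ge> f + 1"
  shows "\<forall>v\<in>V. \<forall>r. 2 * card {i \<in> {1..l}. (v, i) \<notin> F \<and>
            exec_A' V E R k l init send upd env F byz dflt r (v, i) = exec_A E init send upd env r v} > l"
  proof -
  define G where "G k' = {i \<in> {1..l}. {(v, i) | v. v \<in> R k'} \<inter> F = {}}" for k'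
  let ?A' = "exec_A' V E R k l init send upd env F byz dflt"
  let ?A = "exec_A E init send upd env"
  have regV: "\<exists>k'\<in>{1..k}. v \<in> R k'" if "v \<in> V" for v using that R_cover by auto
  have uniq: "k1 = k2" if "k1 \<in> {1..k}" "k2 \<in> {1..k}" "v \<in> R k1" "v \<in> R k2" for k1 k2 v
    using R_disj that by blast
  have GF: "(v, i) \<notin> F" if "i \<in> G k'" "v \<in> R k'" for i k' v using that unfolding G_def by blast
  have Gl: "G k' \<subseteq> {1..l}" for k' unfolding G_def by auto
  have Gc: "2 * card (G k') > l" if "k' \<in> {1..k}" for k'
    using F_good that l_def unfolding G_def by force
  have main: "\<forall>k'\<in>{1..k}. \<forall>v\<in>R k'. \<forall>i\<in>G k'. ?A' r (v, i) = ?A r v" for r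
  proof (induction r)
    case 0 then show ?case by simp
  next
    case (Suc r)
    show ?case
    proof (intro ballI)
      fix k' v i assume k': "k' \<in> {1..k}" and v: "v \<in> R k'" and i: "i \<in> G k'"
      have il: "i \<in> {1..l}" using i Gl by blast
      have msg: "maj (Nb V E R k l (v, i) w)
                  (\<lambda>w'. if w' \<in> F then byz r w' (v, i)
                        else send (fst w') r (?A' r w') v) (dflt r (v, i) w)
                 = send w r (?A r w) v" if wv: "(w, v) \<in> E" for w
      proof -
        have wV: "w \<in> V" using wv E_sub by auto
        show ?thesis
        proof (cases "same_region R k w v")
          case True
          then obtain k2 where k2: "k2 \<in> {1..k}" "w \<in> R k2" "v \<in> R k2" unfolding same_region_def by auto
          have "k2 = k'" using uniq k2 k' v by blast
          hence eq: "?A' r (w, i) = ?A r w" and nf: "(w, i) \<notin> F"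
            using Suc.IH k2 i GF by auto
          show ?thesis
            by (rule maj_eq[where T="{(w, i)}"]) (use Nb_same[OF wv True wV il] eq nf in auto)
        next
          case False
          obtain k2 where k2: "k2 \<in> {1..k}" "w \<in> R k2" using regV wV by blast
          show ?thesis
          proof (rule maj_eq[where T="{w} \<times> G k2"])
            show "finite (Nb V E R k l (v, i) w)" using Nb_diff[OF wv False wV il] by simp
            show "{w} \<times> G k2 \<subseteq> Nb V E R k l (v, i) w" using Nb_diff[OF wv False wV il] Gl by auto
            show "\<forall>x\<in>{w} \<times> G k2. (if x \<in> F then byz r x (v, i) else send (fst x) r (?A' r x) v) = send w r (?A r w) v"
              using Suc.IH k2 GF by auto
            have "card ({w} \<times> G k2) = card (G k2)" by (simp add: card_cartesian_product)
            then show "card (Nb V E R k l (v, i) w) < 2 * card ({w} \<times> G k2)"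
              using Nb_diff[OF wv False wV il] Gc[OF k2(1)] by (simp add: card_cartesian_product)
          qed
        qed
      qed
      have st: "?A' r (v, i) = ?A r v" using Suc.IH k' v i by blast
      show "?A' (Suc r) (v, i) = ?A (Suc r) v"
      proof -
        have "(\<lambda>w. if (w, v) \<in> E
             then Some (maj (Nb V E R k l (v, i) w)
                  (\<lambda>w'. if w' \<in> F then byz r w' (v, i)
                        else send (fst w') r (?A' r w') (fst (v, i)))
                  (dflt r (v, i) w))
             else None) = (\<lambda>w. if (w, v) \<in> E then Some (send w r (?A r w) v) else None)"
          unfolding fst_conv using msg by (intro ext) auto
        then show ?thesis using st by simp
      qed
    qed
  qed
  show ?thesis
  proof (intro ballI allI)
    fix v r assume "v \<in> V"
    then obtain k' where k': "k' \<in> {1..k}" "v \<in> R k'" using regV by blast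
    have "G k' \<subseteq> {i \<in> {1..l}. (v, i) \<notin> F \<and> ?A' r (v, i) = ?A r v}"
      using main k' Gl GF by blast
    hence "card (G k') \<le> card {i \<in> {1..l}. (v, i) \<notin> F \<and> ?A' r (v, i) = ?A r v}"
      by (rule card_mono[rotated]) simp
    thus "l < 2 * card {i \<in> {1..l}. (v, i) \<notin> F \<and> ?A' r (v, i) = ?A r v}"
      using Gc[OF k'(1)] by linarith
  qed
qed

end
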